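(* For every positive constant $c$ there exist a map oracle $f$ and a deterministic exploration algorithm $A$ such that, for all sufficiently large $n$ and every $n$-node graph $G$, the advice $f(G)$ has length at most $\lfloor \log\log\log n - c\rfloor$ (logarithms to base 2), and the agent executing $A$ with input $f(G)$, starting from any node of $G$, visits all nodes of $G$ and stops after at most $Q(n)$ edge traversals, where $Q$ is a polynomial (depending only on $c$).
   Context: Model: a graph is a simple connected undirected graph with $n$ nodes. Nodes are unlabeled; at each node of degree $d$ the incident edges carry distinct port numbers $0,\dots,d-1$, assigned arbitrarily (independently at the two endpoints of an edge). A mobile agent starts at some node $v$. At each step, located at a node $u$ whose degree it knows, it chooses a port $i$ at $u$ and traverses the corresponding edge to a neighbor $w$; upon arrival it learns the port number $j$ of this edge at $w$ and the degree of $w$. The agent must visit all nodes and stop. The time of exploration is the number of edge traversals. A deterministic exploration algorithm receives as input a finite binary string called advice; the size of advice is its length. A map oracle is a function assigning a binary string $f(G)$ to each port-numbered graph $G$ (it does not depend on the starting node). An instance oracle is a function assigning a binary string $f(G,v)$ to each pair $(G,v)$, where $v$ is the starting node of the agent in $G$. *)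

theory Defs
  imports Complex_Main "HOL-Computational_Algebra.Polynomial"
begin

text \<open>The nodes are 0..<pg_n (these names are only for
modelling; the agent never sees them). pg_deg v is the degree of v;
pg_succ v i is the neighbour reached from v through port i (for i < pg_deg v);
pg_rport v i is the port number of that same edge at the other endpoint.\<close>

record pgraph =
  pg_n :: nat
  pg_deg :: "nat \<Rightarrow> nat"
  pg_succ :: "nat \<Rightarrow> nat \<Rightarrow> nat"
  pg_rport :: "nat \<Rightarrow> nat \<Rightarrow> nat"

definition pg_edges :: "pgraph \<Rightarrow> (nat \<times> nat) set" where
  "pg_edges G = {(u, pg_succ G u i) | u i. u < pg_n G \<and> i < pg_deg G u}"

definition valid_pgraph :: "pgraph \<Rightarrow> bool" where
  "valid_pgraph G \<longleftrightarrow>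
     pg_n G \<ge> 1 \<and>
     (\<forall>v < pg_n G. \<forall>i < pg_deg G v.
        pg_succ G v i < pg_n G \<and>
        pg_succ G v i \<noteq> v \<and>
        pg_rport G v i < pg_deg G (pg_succ G v i) \<and>
        pg_succ G (pg_succ G v i) (pg_rport G v i) = v \<and>
        pg_rport G (pg_succ G v i) (pg_rport G v i) = i) \<and>
     (\<forall>v < pg_n G. inj_on (pg_succ G v) {..<pg_deg G v}) \<and>
     (\<forall>v < pg_n G. (0, v) \<in> (pg_edges G)\<^sup>*)"

text \<open>History of the agent: list of (port taken, port of entry at arrival node,
degree of arrival node). A deterministic algorithm gets the advice, the degree
of the starting node and the history, and outputs None (stop) or Some i (take port i).\<close>
type_synonym history = "(nat \<times> nat \<times> nat) list"
type_synonym algorithm = "bool list \<Rightarrow> nat \<Rightarrow> history \<Rightarrow> nat option"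

fun exec :: "algorithm \<Rightarrow> bool list \<Rightarrow> pgraph \<Rightarrow> nat \<Rightarrow> nat \<Rightarrow> nat \<times> history" where
  "exec A adv G v 0 = (v, [])"
| "exec A adv G v (Suc k) =
     (let (u, h) = exec A adv G v k in
      case A adv (pg_deg G v) h of
        None \<Rightarrow> (u, h)
      | Some i \<Rightarrow> (pg_succ G u i, h @ [(i, pg_rport G u i, pg_deg G (pg_succ G u i))]))"

definition explores_in :: "algorithm \<Rightarrow> bool list \<Rightarrow> pgraph \<Rightarrow> nat \<Rightarrow> nat \<Rightarrow> bool" where
  "explores_in A adv G v T \<longleftrightarrow>
     (\<forall>k < T. \<exists>i. A adv (pg_deg G v) (snd (exec A adv G v k)) = Some i \<and>
                   i < pg_deg G (fst (exec A adv G v k))) \<and>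
     A adv (pg_deg G v) (snd (exec A adv G v T)) = None \<and>
     {fst (exec A adv G v k) | k. k \<le> T} = {..<pg_n G}"

end

theory Submission
  imports Defs "HOL-Library.FuncSet"
begin


definition nxt :: "pgraph \<Rightarrow> nat \<Rightarrow> nat \<Rightarrow> nat" where
  "nxt G x c = pg_succ G x (c mod pg_deg G x)"

fun visits :: "pgraph \<Rightarrow> nat \<Rightarrow> nat list \<Rightarrow> nat list" where
  "visits G x [] = [x]"
| "visits G x (c # s) = x # visits G (nxt G x c) s"

definition pos :: "pgraph \<Rightarrow> nat \<Rightarrow> nat list \<Rightarrow> nat" where
  "pos G x s = last (visits G x s)"

fun hist :: "pgraph \<Rightarrow> nat \<Rightarrow> nat list \<Rightarrow> history" where
  "hist G x [] = []"
| "hist G x (c # s) = (c mod pg_deg G x, pg_rport G x (c mod pg_deg G x), pg_deg G (nxt G x c)) # hist G (nxt G x c) s"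

lemma visits_ne[simp]: "visits G x s \<noteq> []" by (cases s) auto

lemma pos_Nil[simp]: "pos G x [] = x" by (simp add: pos_def)
lemma pos_Cons[simp]: "pos G x (c#s) = pos G (nxt G x c) s" by (simp add: pos_def)

lemma pos_snoc: "pos G x (s @ [c]) = nxt G (pos G x s) c"
  by (induction s arbitrary: x) auto

lemma hist_snoc: "hist G x (s @ [c]) = hist G x s @ [(c mod pg_deg G (pos G x s),
   pg_rport G (pos G x s) (c mod pg_deg G (pos G x s)), pg_deg G (nxt G (pos G x s) c))]"
  by (induction s arbitrary: x) auto

lemma length_hist[simp]: "length (hist G x s) = length s"
  by (induction s arbitrary: x) auto

lemma hist_last: "s \<noteq> [] \<Longrightarrow> snd (snd (last (hist G x s))) = pg_deg G (pos G x s)"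
proof (induction s arbitrary: x)
  case Nil then show ?case by simp
next
  case (Cons c s) then show ?case by (cases s) auto
qed

lemma set_visits: "set (visits G x s) = {pos G x (take k s) | k. k \<le> length s}"
proof (induction s arbitrary: x)
  case Nil then show ?case by simp
next
  case (Cons c s)
  have "{pos G x (take k (c#s)) | k. k \<le> length (c#s)} =
        insert x {pos G (nxt G x c) (take k s) | k. k \<le> length s}"
  proof (intro set_eqI iffI)
    fix y assume "y \<in> {pos G x (take k (c#s)) | k. k \<le> length (c#s)}"
    then obtain k where k: "k \<le> Suc (length s)" "y = pos G x (take k (c#s))" by auto
    then show "y \<in> insert x {pos G (nxt G x c) (take k s) | k. k \<le> length s}"
      by (cases k) auto
  next
    fix y assume "y \<in> insert x {pos G (nxt G x c) (take k s) | k. k \<le> length s}"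
    then show "y \<in> {pos G x (take k (c#s)) | k. k \<le> length (c#s)}"
    proof
      assume "y = x" then show ?thesis by (intro CollectI exI[of _ 0]) auto
    next
      assume "y \<in> {pos G (nxt G x c) (take k s) | k. k \<le> length s}"
      then obtain k where "k \<le> length s" "y = pos G (nxt G x c) (take k s)" by auto
      then show ?thesis by (intro CollectI exI[of _ "Suc k"]) auto
    qed
  qed
  then show ?case using Cons by simp
qed



abbreviation "VG G \<equiv> valid_pgraph G \<and> 2 \<le> pg_n G"

lemma vg_succ:
  assumes "valid_pgraph G" "x < pg_n G" "i < pg_deg G x"
  shows "pg_succ G x i < pg_n G" "pg_succ G x i \<noteq> x"
    "pg_rport G x i < pg_deg G (pg_succ G x i)"
    "pg_succ G (pg_succ G x i) (pg_rport G x i) = x"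
  using assms unfolding valid_pgraph_def by auto

lemma edges_sub: "valid_pgraph G \<Longrightarrow> pg_edges G \<subseteq> {..<pg_n G} \<times> {..<pg_n G}"
  unfolding pg_edges_def using vg_succ(1) by blast

lemma edges_finite: "valid_pgraph G \<Longrightarrow> finite (pg_edges G)"
  using edges_sub finite_subset by blast

lemma edges_card: "valid_pgraph G \<Longrightarrow> card (pg_edges G) \<le> pg_n G * pg_n G"
proof -
  assume v: "valid_pgraph G"
  have "card (pg_edges G) \<le> card ({..<pg_n G} \<times> {..<pg_n G})"
    by (rule card_mono) (use edges_sub[OF v] in auto)
  then show ?thesis by (simp add: card_cartesian_product)
qed

lemma edges_sym: assumes "valid_pgraph G" "(a, b) \<in> pg_edges G" shows "(b, a) \<in> pg_edges G"
proof -
  obtain i where i: "a < pg_n G" "i < pg_deg G a" "b = pg_succ G a i" using assms(2) unfolding pg_edges_def by auto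
  note h = vg_succ[OF assms(1) i(1,2)]
  show ?thesis unfolding pg_edges_def i(3) 
    by (rule CollectI, rule exI[of _ "pg_succ G a i"], rule exI[of _ "pg_rport G a i"]) (use h in auto)
qed

lemma edge_in: "x < pg_n G \<Longrightarrow> i < pg_deg G x \<Longrightarrow> (x, pg_succ G x i) \<in> pg_edges G"
  unfolding pg_edges_def by auto

lemma deg_less:
  assumes "valid_pgraph G" "x < pg_n G"
  shows "pg_deg G x < pg_n G"
proof -
  have inj: "inj_on (pg_succ G x) {..<pg_deg G x}" using assms unfolding valid_pgraph_def by auto
  have "pg_succ G x ` {..<pg_deg G x} \<subseteq> {..<pg_n G} - {x}" using vg_succ[OF assms] by auto
  from card_inj_on_le[OF inj this] have "pg_deg G x \<le> pg_n G - 1" using assms by simp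
  then show ?thesis using assms by linarith
qed

lemma conn: "valid_pgraph G \<Longrightarrow> v < pg_n G \<Longrightarrow> (0, v) \<in> (pg_edges G)\<^sup>*"
  unfolding valid_pgraph_def by auto

lemma rtrancl_sym:
  assumes "valid_pgraph G" "(a, b) \<in> (pg_edges G)\<^sup>*"
  shows "(b, a) \<in> (pg_edges G)\<^sup>*"
  using assms(2)
proof induction
  case base then show ?case by simp
next
  case (step y z)
  then show ?case using edges_sym[OF assms(1)] by (meson converse_rtrancl_into_rtrancl)
qed

lemma reach:
  assumes "valid_pgraph G" "x < pg_n G" "v < pg_n G"
  shows "(x, v) \<in> (pg_edges G)\<^sup>*"
  using rtrancl_sym[OF assms(1) conn[OF assms(1,2)]] conn[OF assms(1,3)] by auto

lemma short_path:
  assumes "valid_pgraph G" "x < pg_n G" "v < pg_n G"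
  shows "\<exists>k \<le> pg_n G * pg_n G. (x, v) \<in> pg_edges G ^^ k"
proof -
  have "(x, v) \<in> (\<Union>n\<in>{n. n \<le> card (pg_edges G)}. pg_edges G ^^ n)"
    using reach[OF assms] rtrancl_finite_eq_relpow[OF edges_finite[OF assms(1)]] by simp
  then obtain k where "k \<le> card (pg_edges G)" "(x, v) \<in> pg_edges G ^^ k" by blast
  then show ?thesis using edges_card[OF assms(1)] le_trans by blast
qed

lemma deg_pos:
  assumes "VG G" "x < pg_n G"
  shows "0 < pg_deg G x"
proof -
  define w :: nat where "w = (if x = 0 then 1 else 0)"
  have w: "w < pg_n G" "w \<noteq> x" using assms unfolding w_def by auto
  have "(x, w) \<in> (pg_edges G)\<^sup>*" using reach assms w by auto
  then obtain y where "(x, y) \<in> pg_edges G" using w(2)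
    by (cases rule: converse_rtranclE) auto
  then show ?thesis unfolding pg_edges_def by auto
qed

lemma mod_deg: "VG G \<Longrightarrow> x < pg_n G \<Longrightarrow> c mod pg_deg G x < pg_deg G x"
  using deg_pos by auto

lemma nxt_less: "VG G \<Longrightarrow> x < pg_n G \<Longrightarrow> nxt G x c < pg_n G"
  unfolding nxt_def using vg_succ mod_deg by blast

lemma visits_less: "VG G \<Longrightarrow> x < pg_n G \<Longrightarrow> set (visits G x s) \<subseteq> {..<pg_n G}"
  by (induction s arbitrary: x) (auto simp: nxt_less)

lemma pos_less: "VG G \<Longrightarrow> x < pg_n G \<Longrightarrow> pos G x s < pg_n G"
  using visits_less[of G x s] unfolding pos_def
  by (metis last_in_set lessThan_iff subsetD visits_ne)



fun miss :: "pgraph \<Rightarrow> nat \<Rightarrow> nat \<Rightarrow> nat \<Rightarrow> real" where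
  "miss G v 0 x = (if x = v then 0 else 1)"
| "miss G v (Suc t) x = (if x = v then 0 else (\<Sum>i<pg_deg G x. miss G v t (pg_succ G x i)) / pg_deg G x)"

lemma miss_v[simp]: "miss G v t v = 0" by (cases t) auto

lemma avg_mono: "(\<And>i. i < d \<Longrightarrow> f i \<le> g i) \<Longrightarrow> (\<Sum>i<d. f i) / real d \<le> (\<Sum>i<d. g i) / real d"
  by (intro divide_right_mono sum_mono) auto

lemma avg_const: "0 < d \<Longrightarrow> (\<Sum>i<d. (c::real)) / real d = c" by simp

lemma miss_bounds:
  assumes "VG G" "x < pg_n G"
  shows "0 \<le> miss G v t x \<and> miss G v t x \<le> 1"
  using assms(2)
proof (induction t arbitrary: x)
  case 0 then show ?case by simp
next
  case (Suc t)
  have d: "0 < pg_deg G x" using deg_pos assms(1) Suc.prems by blast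
  have ih: "\<And>i. i < pg_deg G x \<Longrightarrow> 0 \<le> miss G v t (pg_succ G x i) \<and> miss G v t (pg_succ G x i) \<le> 1"
    using Suc.IH vg_succ(1) assms(1) Suc.prems by blast
  have "(\<Sum>i<pg_deg G x. (0::real)) / pg_deg G x \<le> (\<Sum>i<pg_deg G x. miss G v t (pg_succ G x i)) / pg_deg G x"
    by (rule avg_mono) (use ih in auto)
  moreover have "(\<Sum>i<pg_deg G x. miss G v t (pg_succ G x i)) / pg_deg G x \<le> (\<Sum>i<pg_deg G x. (1::real)) / pg_deg G x"
    by (rule avg_mono) (use ih in auto)
  ultimately show ?case using d by auto
qed

lemma miss_nonneg: "VG G \<Longrightarrow> x < pg_n G \<Longrightarrow> 0 \<le> miss G v t x" using miss_bounds by blast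
lemma miss_le1: "VG G \<Longrightarrow> x < pg_n G \<Longrightarrow> miss G v t x \<le> 1" using miss_bounds by blast

lemma miss_mono_Suc:
  assumes "VG G" "x < pg_n G"
  shows "miss G v (Suc t) x \<le> miss G v t x"
  using assms(2)
proof (induction t arbitrary: x)
  case 0
  show ?case
  proof (cases "x = v")
    case False
    then have "miss G v 0 x = 1" by simp
    then show ?thesis using miss_le1[OF assms(1) 0, of v "Suc 0"] by linarith
  qed simp
next
  case (Suc t)
  show ?case
  proof (cases "x = v")
    case False
    have "(\<Sum>i<pg_deg G x. miss G v (Suc t) (pg_succ G x i)) / pg_deg G x \<le> (\<Sum>i<pg_deg G x. miss G v t (pg_succ G x i)) / pg_deg G x"
      by (rule avg_mono) (use Suc.IH vg_succ(1) assms(1) Suc.prems in blast)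
    then show ?thesis using False by simp
  qed simp
qed

lemma miss_mono:
  assumes "VG G" "x < pg_n G" "t \<le> t'"
  shows "miss G v t' x \<le> miss G v t x"
  using lift_Suc_antimono_le[of "\<lambda>t. miss G v t x", OF miss_mono_Suc[OF assms(1,2)] assms(3)] .

lemma double_count:
  assumes "valid_pgraph G"
  shows "(\<Sum>x<pg_n G. \<Sum>i<pg_deg G x. F (pg_succ G x i)) = (\<Sum>y<pg_n G. real (pg_deg G y) * F y)"
proof -
  define P where "P = Sigma {..<pg_n G} (\<lambda>x. {..<pg_deg G x})"
  define \<phi> where "\<phi> = (\<lambda>(x, i). (pg_succ G x i, pg_rport G x i))"
  have mem: "\<And>p. p \<in> P \<Longrightarrow> \<phi> p \<in> P" unfolding P_def \<phi>_def using vg_succ[OF assms] by auto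
  have inv: "\<And>p. p \<in> P \<Longrightarrow> \<phi> (\<phi> p) = p" unfolding P_def \<phi>_def using assms
    unfolding valid_pgraph_def by auto
  have "(\<Sum>x<pg_n G. \<Sum>i<pg_deg G x. F (pg_succ G x i)) = (\<Sum>p\<in>P. F (pg_succ G (fst p) (snd p)))"
    unfolding P_def by (simp add: sum.Sigma split_def)
  also have "\<dots> = (\<Sum>p\<in>P. F (pg_succ G (fst (\<phi> p)) (snd (\<phi> p))))"
    by (rule sum.reindex_bij_witness[of _ \<phi> \<phi>]) (use mem inv in auto)
  also have "\<dots> = (\<Sum>p\<in>P. F (fst p))"
    by (rule sum.cong) (use vg_succ(4)[OF assms] in \<open>auto simp: P_def \<phi>_def\<close>)
  also have "\<dots> = (\<Sum>x<pg_n G. \<Sum>i<pg_deg G x. F x)"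
    unfolding P_def
    by (subst sum.Sigma) (auto simp: split_def)
  also have "\<dots> = (\<Sum>y<pg_n G. real (pg_deg G y) * F y)" by simp
  finally show ?thesis .
qed

definition S :: "pgraph \<Rightarrow> nat \<Rightarrow> nat \<Rightarrow> real" where
  "S G v t = (\<Sum>x<pg_n G. real (pg_deg G x) * miss G v t x)"

lemma S_step:
  assumes "VG G" "v < pg_n G"
  shows "S G v (Suc t) + (\<Sum>i<pg_deg G v. miss G v t (pg_succ G v i)) = S G v t"
proof -
  define h where "h x = (\<Sum>i<pg_deg G x. miss G v t (pg_succ G x i))" for x
  have "S G v (Suc t) = (\<Sum>x<pg_n G. (if x = v then 0 else h x))"
    unfolding S_def h_def by (rule sum.cong) (use deg_pos[OF assms(1)] in auto)
  moreover have "(\<Sum>x<pg_n G. h x) = (\<Sum>x<pg_n G. (if x = v then 0 else h x)) + h v"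
  proof -
    have "(\<Sum>x<pg_n G. h x) = (\<Sum>x<pg_n G. (if x = v then 0 else h x) + (if x = v then h v else 0))"
      by (rule sum.cong) auto
    also have "\<dots> = (\<Sum>x<pg_n G. (if x = v then 0 else h x)) + h v"
      using assms(2) by (simp add: sum.distrib)
    finally show ?thesis .
  qed
  moreover have "(\<Sum>x<pg_n G. h x) = S G v t"
    unfolding h_def S_def using double_count assms(1) by blast
  ultimately show ?thesis unfolding h_def by linarith
qed

lemma neighbor_bound:
  assumes "VG G" "v < pg_n G" "i0 < pg_deg G v"
  shows "real T * miss G v T (pg_succ G v i0) \<le> real (pg_n G * pg_n G)"
proof -
  let ?y = "pg_succ G v i0"
  have y: "?y < pg_n G" using vg_succ assms by blast
  have nn: "\<And>x t. x < pg_n G \<Longrightarrow> 0 \<le> miss G v t x" using miss_nonneg assms(1) by blast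
  have step: "miss G v t ?y \<le> S G v t - S G v (Suc t)" for t
  proof -
    have "miss G v t ?y \<le> (\<Sum>i<pg_deg G v. miss G v t (pg_succ G v i))"
      by (rule member_le_sum[of i0 "{..<pg_deg G v}" "\<lambda>i. miss G v t (pg_succ G v i)", simplified])
         (use assms vg_succ(1) nn in auto)
    then show ?thesis using S_step[OF assms(1,2), of t] by linarith
  qed
  have "real T * miss G v T ?y = (\<Sum>t<T. miss G v T ?y)" by simp
  also have "\<dots> \<le> (\<Sum>t<T. miss G v t ?y)"
    by (rule sum_mono) (use miss_mono[OF assms(1) y] in auto)
  also have "\<dots> \<le> (\<Sum>t<T. S G v t - S G v (Suc t))" by (rule sum_mono) (rule step)
  also have "\<dots> = S G v 0 - S G v T" using sum_lessThan_telescope'[of "S G v" T] by simp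
  also have "\<dots> \<le> S G v 0"
  proof -
    have "0 \<le> S G v T" unfolding S_def by (rule sum_nonneg) (use nn in simp)
    then show ?thesis by simp
  qed
  also have "\<dots> \<le> (\<Sum>x<pg_n G. real (pg_n G))"
    unfolding S_def
  proof (rule sum_mono)
    fix x assume x: "x \<in> {..<pg_n G}"
    have "real (pg_deg G x) \<le> real (pg_n G)" using deg_less assms(1) x by (simp add: less_imp_le)
    moreover have "miss G v 0 x \<le> 1" "0 \<le> miss G v 0 x" by auto
    ultimately show "real (pg_deg G x) * miss G v 0 x \<le> real (pg_n G)"
      by (metis mult_left_le mult_right_mono of_nat_0_le_iff order_trans)
  qed
  also have "\<dots> = real (pg_n G * pg_n G)" by simp
  finally show ?thesis .
qed



lemma miss_SM:
  assumes "VG G" "x < pg_n G" "y < pg_n G"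
  shows "miss G v (a + b) x \<le> miss G y a x + miss G v b y"
  using assms(2)
proof (induction a arbitrary: x)
  case 0
  show ?case
  proof (cases "x = y")
    case False
    then show ?thesis using miss_le1[OF assms(1) 0, of v b] miss_nonneg[OF assms(1,3), of v b] by simp
  qed simp
next
  case (Suc a)
  show ?case
  proof (cases "x = v")
    case True
    have "0 \<le> miss G y (Suc a) x" by (rule miss_nonneg[OF assms(1) Suc.prems])
    have "0 \<le> miss G v b y" by (rule miss_nonneg[OF assms(1,3)])
    moreover have "miss G v (Suc a + b) x = 0" using True by simp
    ultimately show ?thesis using \<open>0 \<le> miss G y (Suc a) x\<close> by linarith
  next
    case xv: False
    show ?thesis
    proof (cases "x = y")
      case True
      then show ?thesis using miss_mono[OF assms(1,3), of b "Suc a + b" v] by simp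
    next
      case False
      have d: "0 < pg_deg G x" using deg_pos assms(1) Suc.prems by blast
      have "miss G v (Suc a + b) x = (\<Sum>i<pg_deg G x. miss G v (a + b) (pg_succ G x i)) / pg_deg G x"
        using xv by simp
      also have "\<dots> \<le> (\<Sum>i<pg_deg G x. miss G y a (pg_succ G x i) + miss G v b y) / pg_deg G x"
        by (rule avg_mono) (use Suc.IH vg_succ(1) assms(1) Suc.prems in blast)
      also have "\<dots> = (\<Sum>i<pg_deg G x. miss G y a (pg_succ G x i)) / pg_deg G x + miss G v b y"
        using d by (simp add: sum.distrib add_divide_distrib)
      also have "\<dots> = miss G y (Suc a) x + miss G v b y" using False by simp
      finally show ?thesis .
    qed
  qed
qed

lemma miss_PR:
  assumes "VG G" "x < pg_n G" "\<And>y. y < pg_n G \<Longrightarrow> miss G v b y \<le> B"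
  shows "miss G v (a + b) x \<le> miss G v a x * B"
  using assms(2)
proof (induction a arbitrary: x)
  case 0
  then show ?case using assms(3) by (cases "x = v") auto
next
  case (Suc a)
  show ?case
  proof (cases "x = v")
    case False
    have "miss G v (Suc a + b) x = (\<Sum>i<pg_deg G x. miss G v (a + b) (pg_succ G x i)) / pg_deg G x"
      using False by simp
    also have "\<dots> \<le> (\<Sum>i<pg_deg G x. miss G v a (pg_succ G x i) * B) / pg_deg G x"
      by (rule avg_mono) (use Suc.IH vg_succ(1) assms(1) Suc.prems in blast)
    also have "\<dots> = miss G v (Suc a) x * B" using False by (simp add: sum_distrib_right)
    finally show ?thesis .
  qed simp
qed

lemma miss_pow:
  assumes "VG G" "x < pg_n G" "\<And>y. y < pg_n G \<Longrightarrow> miss G v b y \<le> B" "0 \<le> B"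
  shows "miss G v (r * b) x \<le> B ^ r"
  using assms(2)
proof (induction r arbitrary: x)
  case 0
  then show ?case using miss_le1[OF assms(1)] by simp
next
  case (Suc r)
  have "miss G v (Suc r * b) x = miss G v (r * b + b) x" by (simp add: add.commute)
  also have "\<dots> \<le> miss G v (r * b) x * B" by (rule miss_PR[OF assms(1) Suc.prems assms(3)])
  also have "\<dots> \<le> B ^ r * B" by (rule mult_right_mono[OF Suc.IH[OF Suc.prems] assms(4)])
  finally show ?case by (simp add: mult.commute)
qed

lemma miss_chain:
  assumes "VG G" "x < pg_n G" "(x, v) \<in> pg_edges G ^^ k" "0 < T"
  shows "miss G v (k * T) x \<le> real k * real (pg_n G * pg_n G) / real T"
  using assms(2,3)
proof (induction k arbitrary: x)
  case 0
  then show ?case by simp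
next
  case (Suc k)
  obtain y where xy: "(x, y) \<in> pg_edges G" and yv: "(y, v) \<in> pg_edges G ^^ k"
    using relpow_Suc_D2[OF Suc.prems(2)] by blast
  obtain i where i: "i < pg_deg G x" "y = pg_succ G x i"
    using xy unfolding pg_edges_def by auto
  note h = vg_succ[OF conjunct1[OF assms(1)] Suc.prems(1) i(1)]
  have y: "y < pg_n G" using h i by simp
  have nb: "real T * miss G y T x \<le> real (pg_n G * pg_n G)"
    using neighbor_bound[OF assms(1) y, of "pg_rport G x i" T] h i by simp
  have nb': "miss G y T x \<le> real (pg_n G * pg_n G) / real T"
    using nb assms(4) by (simp add: field_simps)
  have "miss G v (Suc k * T) x = miss G v (T + k * T) x" by simp
  also have "\<dots> \<le> miss G y T x + miss G v (k * T) y" by (rule miss_SM[OF assms(1) Suc.prems(1) y])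
  also have "\<dots> \<le> real (pg_n G * pg_n G) / real T + real k * real (pg_n G * pg_n G) / real T"
    using nb' Suc.IH[OF y yv] by linarith
  also have "\<dots> = (real (pg_n G * pg_n G) + real k * real (pg_n G * pg_n G)) / real T"
    by (simp add: add_divide_distrib)
  also have "\<dots> = real (Suc k) * real (pg_n G * pg_n G) / real T" by (simp add: algebra_simps)
  finally show ?case .
qed

definition T0 :: "nat \<Rightarrow> nat" where "T0 M = M * M * (2 * M ^ 4)"

lemma miss_half:
  assumes "VG G" "pg_n G \<le> M" "x < pg_n G" "v < pg_n G"
  shows "miss G v (T0 M) x \<le> 1 / 2"
proof -
  let ?n = "pg_n G"
  obtain k where k: "k \<le> ?n * ?n" "(x, v) \<in> pg_edges G ^^ k"
    using short_path[OF conjunct1[OF assms(1)] assms(3,4)] by blast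
  have M: "1 \<le> M" using assms by linarith
  let ?T = "2 * M ^ 4"
  have Tp: "0 < ?T" using M by simp
  have kM: "k \<le> M * M" using k(1) assms(2) mult_le_mono le_trans by blast
  have "k * ?T \<le> T0 M" unfolding T0_def using kM by (rule mult_le_mono1)
  then have "miss G v (T0 M) x \<le> miss G v (k * ?T) x" by (rule miss_mono[OF assms(1,3)])
  also have "\<dots> \<le> real k * real (?n * ?n) / real ?T" by (rule miss_chain[OF assms(1,3) k(2) Tp])
  also have "\<dots> \<le> real (M * M) * real (M * M) / real ?T"
  proof -
    have "real k \<le> real (M * M)" using k(1) assms(2) by (metis mult_le_mono of_nat_le_iff order_trans)
    moreover have "real (?n * ?n) \<le> real (M * M)" using mult_le_mono[OF assms(2) assms(2)] by (simp only: of_nat_le_iff)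
    ultimately show ?thesis by (intro divide_right_mono mult_mono) auto
  qed
  also have "\<dots> = 1 / 2" using M by (simp add: field_simps power4_eq_xxxx)
  finally show ?thesis .
qed

lemma miss_small:
  assumes "VG G" "pg_n G \<le> M" "x < pg_n G" "v < pg_n G"
  shows "miss G v (r * T0 M) x \<le> (1 / 2) ^ r"
  by (rule miss_pow[OF assms(1,3)]) (use miss_half[OF assms(1,2) _ assms(4)] in auto)



lemma sum_mod_aux: "0 < d \<Longrightarrow> (\<Sum>c<d * q. (f :: nat \<Rightarrow> real) (c mod d)) = real q * (\<Sum>i<d. f i)"
proof (induction q)
  case 0 then show ?case by simp
next
  case (Suc q)
  have "(\<Sum>c<d * Suc q. f (c mod d)) = (\<Sum>c\<in>{0..<d * q}. f (c mod d)) + (\<Sum>c\<in>{d * q..<d * q + d}. f (c mod d))"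
    by (simp add: sum.atLeastLessThan_concat atLeast0LessThan[symmetric] add.commute)
  also have "(\<Sum>c\<in>{d * q..<d * q + d}. f (c mod d)) = (\<Sum>i\<in>{0..<d}. f ((i + d * q) mod d))"
    using sum.shift_bounds_nat_ivl[of "\<lambda>c. f (c mod d)" 0 "d * q" d] by (simp add: add.commute)
  also have "\<dots> = (\<Sum>i<d. f i)" by (simp add: atLeast0LessThan)
  finally show ?case using Suc by (simp add: atLeast0LessThan algebra_simps)
qed

lemma sum_mod: "0 < d \<Longrightarrow> d dvd L \<Longrightarrow> (\<Sum>c<L. (f :: nat \<Rightarrow> real) (c mod d)) = real L / real d * (\<Sum>i<d. f i)"
proof -
  assume d: "0 < d" "d dvd L"
  then obtain q where q: "L = d * q" by blast
  show ?thesis using sum_mod_aux[OF d(1), where q=q and f=f] d(1) q by simp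
qed

definition seqs :: "nat \<Rightarrow> nat \<Rightarrow> nat list set" where
  "seqs L t = {s. set s \<subseteq> {..<L} \<and> length s = t}"

definition bad :: "pgraph \<Rightarrow> nat \<Rightarrow> nat \<Rightarrow> nat \<Rightarrow> nat \<Rightarrow> nat list set" where
  "bad G v L t x = {s \<in> seqs L t. v \<notin> set (visits G x s)}"

lemma card_seqs: "card (seqs L t) = L ^ t"
  unfolding seqs_def using card_lists_length_eq[of "{..<L}" t] by simp

lemma finite_seqs: "finite (seqs L t)"
  unfolding seqs_def using finite_lists_length_eq[of "{..<L}" t] by simp

lemma seqs_Suc: "seqs L (Suc t) = (\<Union>c<L. Cons c ` seqs L t)"
proof (intro set_eqI iffI)
  fix s assume "s \<in> seqs L (Suc t)"
  then obtain c s' where "s = c # s'" "c < L" "s' \<in> seqs L t"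
    unfolding seqs_def by (cases s) auto
  then show "s \<in> (\<Union>c<L. Cons c ` seqs L t)" by auto
qed (auto simp: seqs_def)

lemma bad_Suc: "x \<noteq> v \<Longrightarrow> bad G v L (Suc t) x = (\<Union>c<L. Cons c ` bad G v L t (nxt G x c))"
  unfolding bad_def seqs_Suc by auto

lemma x_in_visits: "x \<in> set (visits G x s)" by (cases s) auto

lemma bad_v: "bad G v L t v = {}"
  unfolding bad_def using x_in_visits by auto

lemma card_bad:
  assumes "VG G" "x < pg_n G" "\<And>y. y < pg_n G \<Longrightarrow> pg_deg G y dvd L"
  shows "real (card (bad G v L t x)) = real L ^ t * miss G v t x"
  using assms(2)
proof (induction t arbitrary: x)
  case 0
  have s0: "seqs L 0 = {[]}" unfolding seqs_def by auto
  have "bad G v L 0 x = (if x = v then {} else {[]})" unfolding bad_def s0 by auto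
  then show ?case by simp
next
  case (Suc t)
  show ?case
  proof (cases "x = v")
    case True then show ?thesis using bad_v by simp
  next
    case False
    let ?d = "pg_deg G x"
    have d: "0 < ?d" using deg_pos assms(1) Suc.prems by blast
    have fin: "finite (bad G v L t y)" for y unfolding bad_def using finite_seqs by simp
    have "card (bad G v L (Suc t) x) = (\<Sum>c<L. card (Cons c ` bad G v L t (nxt G x c)))"
      unfolding bad_Suc[OF False] by (rule card_UN_disjoint) (auto simp: fin)
    also have "\<dots> = (\<Sum>c<L. card (bad G v L t (nxt G x c)))"
      by (rule sum.cong) (auto simp: card_image)
    finally have "real (card (bad G v L (Suc t) x)) = (\<Sum>c<L. real (card (bad G v L t (nxt G x c))))"
      by simp
    also have "\<dots> = (\<Sum>c<L. real L ^ t * miss G v t (pg_succ G x (c mod ?d)))"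
      by (rule sum.cong) (use Suc.IH nxt_less[OF assms(1) Suc.prems] in \<open>auto simp: nxt_def\<close>)
    also have "\<dots> = real L ^ t * (real L / real ?d * (\<Sum>i<?d. miss G v t (pg_succ G x i)))"
      using sum_mod[OF d assms(3)[OF Suc.prems], of "\<lambda>i. miss G v t (pg_succ G x i)"]
      by (simp add: sum_distrib_left[symmetric])
    also have "\<dots> = real L ^ Suc t * miss G v (Suc t) x" using False by simp
    finally show ?thesis .
  qed
qed



definition rho :: "nat \<Rightarrow> pgraph \<Rightarrow> nat \<times> (nat \<Rightarrow> nat) \<times> (nat \<times> nat \<Rightarrow> nat)" where
  "rho M G = (pg_n G, restrict (\<lambda>v. if v < pg_n G then pg_deg G v else 0) {..<M},
     restrict (\<lambda>(v, i). if v < pg_n G \<and> i < pg_deg G v then pg_succ G v i else 0) ({..<M} \<times> {..<M}))"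

definition Rset :: "nat \<Rightarrow> (nat \<times> (nat \<Rightarrow> nat) \<times> (nat \<times> nat \<Rightarrow> nat)) set" where
  "Rset M = {..M} \<times> (PiE {..<M} (\<lambda>_. {..M})) \<times> (PiE ({..<M} \<times> {..<M}) (\<lambda>_. {..<M}))"

lemma restrict_eqD: "restrict f A = restrict g A \<Longrightarrow> a \<in> A \<Longrightarrow> f a = g a"
  by (metis restrict_apply')

lemma rho_in:
  assumes "VG G" "pg_n G \<le> M"
  shows "rho M G \<in> Rset M"
proof -
  have 1: "(if v < pg_n G then pg_deg G v else 0) \<in> {..M}" for v
    using deg_less[OF conjunct1[OF assms(1)], of v] assms(2) by auto
  have 2: "(if v < pg_n G \<and> i < pg_deg G v then pg_succ G v i else 0) \<in> {..<M}" for v i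
    using vg_succ(1)[OF conjunct1[OF assms(1)], of v i] assms by auto
  show ?thesis unfolding rho_def Rset_def using 1 2 assms(2)
    by (auto simp: restrict_PiE_iff)
qed

lemma card_Rset: "card (Rset M) = (M + 1) * (M + 1) ^ M * M ^ (M * M)"
  unfolding Rset_def by (simp add: card_cartesian_product card_PiE, simp add: algebra_simps)

lemma visits_inv:
  assumes "VG G" "VG G'" "pg_n G \<le> M" "rho M G = rho M G'" "x < pg_n G"
  shows "visits G x s = visits G' x s"
  using assms(5)
proof (induction s arbitrary: x)
  case Nil then show ?case by simp
next
  case (Cons c s)
  have n: "pg_n G' = pg_n G" using assms(4) unfolding rho_def by simp
  have xM: "x < M" using Cons.prems assms(3) by simp
  have "(\<lambda>v. if v < pg_n G then pg_deg G v else 0) x = (\<lambda>v. if v < pg_n G' then pg_deg G' v else 0) x"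
    by (rule restrict_eqD[of _ "{..<M}"]) (use assms(4) xM in \<open>auto simp: rho_def\<close>)
  then have d: "pg_deg G' x = pg_deg G x" using n Cons.prems by simp
  let ?i = "c mod pg_deg G x"
  have i: "?i < pg_deg G x" using mod_deg[OF assms(1) Cons.prems] .
  have iM: "?i < M" using i deg_less[OF conjunct1[OF assms(1)] Cons.prems] assms(3) by linarith
  have "(\<lambda>(v, i). if v < pg_n G \<and> i < pg_deg G v then pg_succ G v i else 0) (x, ?i) =
        (\<lambda>(v, i). if v < pg_n G' \<and> i < pg_deg G' v then pg_succ G' v i else 0) (x, ?i)"
    by (rule restrict_eqD[of _ "{..<M} \<times> {..<M}"]) (use assms(4) xM iM in \<open>auto simp: rho_def\<close>)
  then have "pg_succ G x ?i = pg_succ G' x ?i" using n d i Cons.prems by simp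
  then have nx: "nxt G x c = nxt G' x c" unfolding nxt_def using d by simp
  show ?case using Cons.IH[OF nxt_less[OF assms(1) Cons.prems, of c]] nx by simp
qed

definition Pm :: "nat \<Rightarrow> nat" where "Pm M = M * (M * M + M + 3)"
definition Tt :: "nat \<Rightarrow> nat" where "Tt M = (Pm M + 1) * T0 M"

definition good :: "nat \<Rightarrow> nat list \<Rightarrow> bool" where
  "good M s \<longleftrightarrow> s \<in> seqs (fact M) (Tt M) \<and>
     (\<forall>G. VG G \<and> pg_n G \<le> M \<longrightarrow> (\<forall>x < pg_n G. \<forall>v < pg_n G. v \<in> set (visits G x s)))"

lemma pow_aux: "(a::nat) * a ^ M * a ^ (M * M) * (a * a) = a ^ (M * M + M + 3)"
  by (simp add: power_add power3_eq_cube algebra_simps)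

lemma card_K_bound:
  assumes "1 \<le> M"
  shows "card (Rset M \<times> {..<M} \<times> {..<M}) \<le> 2 ^ Pm M"
proof -
  have "card (Rset M \<times> {..<M} \<times> {..<M}) = (M + 1) * (M + 1) ^ M * M ^ (M * M) * (M * M)"
    by (simp add: card_cartesian_product card_Rset)
  also have "\<dots> \<le> (M + 1) * (M + 1) ^ M * (M + 1) ^ (M * M) * ((M + 1) * (M + 1))"
    by (intro mult_le_mono power_mono) auto
  also have "\<dots> = (M + 1) ^ (M * M + M + 3)" by (rule pow_aux)
  also have "\<dots> \<le> (2 ^ M) ^ (M * M + M + 3)"
    by (rule power_mono) (use less_exp[of M] in \<open>auto simp: Suc_le_eq\<close>)
  also have "\<dots> = 2 ^ Pm M" unfolding Pm_def by (simp add: power_mult)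
  finally show ?thesis .
qed

lemma deg_dvd_fact: "VG G \<Longrightarrow> pg_n G \<le> M \<Longrightarrow> y < pg_n G \<Longrightarrow> pg_deg G y dvd fact M"
  using deg_pos[of G y] deg_less[of G y] by (intro dvd_fact) auto

lemma card_bad_bound:
  assumes "VG G" "pg_n G \<le> M" "x < pg_n G" "v < pg_n G"
  shows "real (card (bad G v (fact M) (Tt M) x)) \<le> real (fact M) ^ Tt M / 2 ^ (Pm M + 1)"
proof -
  have "real (card (bad G v (fact M) (Tt M) x)) = real (fact M) ^ Tt M * miss G v (Tt M) x"
    by (rule card_bad[OF assms(1,3)]) (rule deg_dvd_fact[OF assms(1,2)])
  also have "\<dots> \<le> real (fact M) ^ Tt M * (1 / 2) ^ (Pm M + 1)"
    unfolding Tt_def by (intro mult_left_mono miss_small[OF assms]) auto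
  also have "\<dots> = real (fact M) ^ Tt M / 2 ^ (Pm M + 1)"
    by (simp only: power_one_over times_divide_eq_right mult_1_right)
  finally show ?thesis .
qed

lemma exists_good:
  assumes "1 \<le> M"
  shows "\<exists>s. good M s"
proof -
  let ?L = "fact M" and ?T = "Tt M"
  define Vl where "Vl = {G. VG G \<and> pg_n G \<le> M}"
  define rep where "rep q = (SOME G. G \<in> Vl \<and> rho M G = q)" for q
  define K where "K = Rset M \<times> {..<M} \<times> {..<M}"
  define g where "g = (\<lambda>(q, x, v). bad (rep q) v ?L ?T x)"
  define F where "F = {bad G v ?L ?T x | G x v. G \<in> Vl \<and> x < pg_n G \<and> v < pg_n G}"
  have FK: "F \<subseteq> g ` K"
  proof
    fix A assume "A \<in> F"
    then obtain G x v where G: "G \<in> Vl" "x < pg_n G" "v < pg_n G" and A: "A = bad G v ?L ?T x"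
      unfolding F_def by blast
    have ex: "\<exists>G'. G' \<in> Vl \<and> rho M G' = rho M G" using G by blast
    define G' where "G' = rep (rho M G)"
    have G': "G' \<in> Vl" "rho M G' = rho M G" using someI_ex[OF ex] unfolding G'_def rep_def by auto
    have VG: "VG G" "VG G'" "pg_n G \<le> M" using G G' unfolding Vl_def by auto
    have bb: "bad G' v ?L ?T x = bad G v ?L ?T x"
      unfolding bad_def using visits_inv[OF VG(1,2,3) G'(2)[symmetric] G(2)] by simp
    have inK: "(rho M G, x, v) \<in> K" unfolding K_def using rho_in VG G by auto
    show "A \<in> g ` K" by (rule rev_image_eqI[OF inK]) (simp add: A g_def bb[unfolded G'_def])
  qed
  have finK: "finite K" unfolding K_def Rset_def by (auto intro!: finite_PiE)
  have cardF: "card F \<le> 2 ^ Pm M"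
    using card_mono[OF finite_imageI[OF finK] FK] card_image_le[OF finK, of g] card_K_bound[OF assms]
    unfolding K_def by linarith
  have finF: "finite F" using finite_subset[OF FK finite_imageI[OF finK]] .
  have each: "real (card A) \<le> real ?L ^ ?T / 2 ^ (Pm M + 1)" if hA: "A \<in> F" for A
  proof -
    obtain G x v where G: "G \<in> Vl" "x < pg_n G" "v < pg_n G" and A: "A = bad G v ?L ?T x"
      using hA unfolding F_def by blast
    show ?thesis unfolding A by (rule card_bad_bound) (use G in \<open>auto simp: Vl_def\<close>)
  qed
  have "real (card (\<Union>F)) \<le> real (\<Sum>A\<in>F. card A)"
    using card_Union_le_sum_card[of F] by linarith
  also have "\<dots> = (\<Sum>A\<in>F. real (card A))" by simp
  also have "\<dots> \<le> (\<Sum>A\<in>F. real ?L ^ ?T / 2 ^ (Pm M + 1))" by (rule sum_mono) (rule each)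
  also have "\<dots> = real (card F) * (real ?L ^ ?T / 2 ^ (Pm M + 1))" by simp
  also have "\<dots> \<le> 2 ^ Pm M * (real ?L ^ ?T / 2 ^ (Pm M + 1))"
    by (rule mult_right_mono) (use cardF in \<open>auto simp: of_nat_le_iff[symmetric]\<close>)
  also have "\<dots> = real ?L ^ ?T / 2" by simp
  also have "\<dots> < real ?L ^ ?T" by simp
  finally have "card (\<Union>F) < card (seqs ?L ?T)" unfolding card_seqs by (metis of_nat_less_iff of_nat_power of_nat_fact)
  moreover have "\<Union>F \<subseteq> seqs ?L ?T"
  proof
    fix s assume "s \<in> \<Union>F"
    then obtain A where "A \<in> F" "s \<in> A" by blast
    then obtain G x v where "A = bad G v ?L ?T x" unfolding F_def by blast
    then show "s \<in> seqs ?L ?T" using \<open>s \<in> A\<close> unfolding bad_def by blast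
  qed
  ultimately have "\<not> seqs ?L ?T \<subseteq> \<Union>F"
    using card_mono[OF finite_subset[OF _ finite_seqs]] by (meson leD subset_refl)
  then obtain s where s: "s \<in> seqs ?L ?T" "s \<notin> \<Union>F" by blast
  have "good M s" unfolding good_def
  proof (intro conjI allI impI s(1))
    fix G x v assume G: "VG G \<and> pg_n G \<le> M" and xv: "x < pg_n G" "v < pg_n G"
    have "bad G v ?L ?T x \<in> F" unfolding F_def Vl_def using G xv by (intro CollectI exI) auto
    then show "v \<in> set (visits G x s)" using s unfolding bad_def by blast
  qed
  then show ?thesis by blast
qed



definition algo :: "(bool list \<Rightarrow> nat list) \<Rightarrow> algorithm" where
  "algo \<sigma> adv d h = (let s = \<sigma> adv; k = length h;
      cd = (if h = [] then d else snd (snd (last h))) in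
      if k < length s then Some (s ! k mod cd) else None)"

lemma algo_step:
  assumes "k < length (\<sigma> adv)"
  shows "algo \<sigma> adv (pg_deg G v) (hist G v (take k (\<sigma> adv))) =
         Some (\<sigma> adv ! k mod pg_deg G (pos G v (take k (\<sigma> adv))))"
proof (cases "k = 0")
  case True then show ?thesis using assms by (simp add: algo_def Let_def)
next
  case False
  then have ne: "take k (\<sigma> adv) \<noteq> []" using assms by (cases "\<sigma> adv") auto
  have "hist G v (take k (\<sigma> adv)) \<noteq> []" using ne by (metis length_0_conv length_hist)
  then show ?thesis using assms hist_last[OF ne, of G v] by (simp add: algo_def Let_def)
qed

lemma exec_eq:
  assumes "k \<le> length (\<sigma> adv)"
  shows "exec (algo \<sigma>) adv G v k = (pos G v (take k (\<sigma> adv)), hist G v (take k (\<sigma> adv)))"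
  using assms
proof (induction k)
  case 0 then show ?case by simp
next
  case (Suc k)
  then have k: "k < length (\<sigma> adv)" by simp
  have tk: "take (Suc k) (\<sigma> adv) = take k (\<sigma> adv) @ [\<sigma> adv ! k]" using k by (simp add: take_Suc_conv_app_nth)
  show ?case using Suc.IH k algo_step[where k=k and \<sigma>=\<sigma> and adv=adv and G=G and v=v, OF k]
    by (simp add: tk pos_snoc hist_snoc nxt_def)
qed

lemma algo_explores:
  assumes "VG G" "v < pg_n G" "\<forall>w < pg_n G. w \<in> set (visits G v (\<sigma> adv))"
  shows "explores_in (algo \<sigma>) adv G v (length (\<sigma> adv))"
  unfolding explores_in_def
proof (intro conjI allI impI)
  let ?s = "\<sigma> adv"
  fix k assume k: "k < length ?s"
  have e: "exec (algo \<sigma>) adv G v k = (pos G v (take k ?s), hist G v (take k ?s))"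
    using exec_eq k by simp
  have p: "pos G v (take k ?s) < pg_n G" using pos_less[OF assms(1,2)] .
  show "\<exists>i. algo \<sigma> adv (pg_deg G v) (snd (exec (algo \<sigma>) adv G v k)) = Some i \<and>
             i < pg_deg G (fst (exec (algo \<sigma>) adv G v k))"
    using algo_step[where k=k and \<sigma>=\<sigma> and adv=adv and G=G and v=v, OF k] mod_deg[OF assms(1) p] e by simp
next
  let ?s = "\<sigma> adv"
  show "algo \<sigma> adv (pg_deg G v) (snd (exec (algo \<sigma>) adv G v (length ?s))) = None"
    using exec_eq[of "length ?s" \<sigma> adv G v] by (simp add: algo_def Let_def)
next
  let ?s = "\<sigma> adv"
  have "{fst (exec (algo \<sigma>) adv G v k) |k. k \<le> length ?s} = {pos G v (take k ?s) |k. k \<le> length ?s}"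
    using exec_eq[of _ \<sigma> adv G v] by force
  also have "\<dots> = set (visits G v ?s)" by (rule set_visits[symmetric])
  also have "\<dots> = {..<pg_n G}" using visits_less[OF assms(1,2)] assms(3) by auto
  finally show "{fst (exec (algo \<sigma>) adv G v k) |k. k \<le> length ?s} = {..<pg_n G}" .
qed



fun enc :: "nat \<Rightarrow> bool list" where
  "enc 0 = []"
| "enc (Suc j) = odd (Suc j) # enc (Suc j div 2)"

fun dec :: "bool list \<Rightarrow> nat" where
  "dec [] = 0"
| "dec (b # bs) = (if b then 1 else 0) + 2 * dec bs"

lemma dec_enc: "dec (enc j) = j"
  by (induction j rule: enc.induct) auto

lemma length_enc: "j < 2 ^ k \<Longrightarrow> length (enc j) \<le> k"
proof (induction k arbitrary: j)
  case 0 then show ?case by simp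
next
  case (Suc k)
  show ?case
  proof (cases j)
    case (Suc i)
    have "Suc i div 2 < 2 ^ k" using Suc.prems Suc by simp
    then show ?thesis using Suc.IH Suc by simp
  qed simp
qed

lemma log_part:
  fixes c :: real
  assumes c: "c > 0" and D: "real D \<ge> 2 powr (c + 2)"
    and n: "real n \<ge> 2 powr (2 powr (2 powr (c + 2)))"
    and j: "2 ^ (2 ^ ((j - 1) * D)) < n"
  shows "real (length (enc j)) \<le> of_int \<lfloor>log 2 (log 2 (log 2 (real n))) - c\<rfloor>"
proof -
  define a where "a = 2 powr (c + 2)"
  have a0: "a > 0" unfolding a_def by simp
  define L1 where "L1 = log 2 (real n)"
  define L2 where "L2 = log 2 L1"
  define L3 where "L3 = log 2 L2"
  have pa: "2 powr a > 0" by simp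
  have "0 < (2::real) powr (2 powr (2 powr (c + 2)))" by simp
  then have n0: "real n > 0" using n by linarith
  have "L1 \<ge> log 2 (2 powr (2 powr a))" unfolding L1_def a_def
    using n n0 by (subst log_le_cancel_iff) auto
  then have L1: "L1 \<ge> 2 powr a" by simp
  have L1p: "L1 > 0" using L1 pa by linarith
  have "L2 \<ge> log 2 (2 powr a)" unfolding L2_def using log_le_cancel_iff[of 2 "2 powr a" L1] L1 L1p pa by linarith
  then have L2: "L2 \<ge> a" by simp
  have L2p: "L2 > 0" using L2 a0 by linarith
  have "L3 \<ge> log 2 a" unfolding L3_def using log_le_cancel_iff[of 2 a L2] L2 L2p a0 by linarith
  then have L3: "L3 \<ge> c + 2" unfolding a_def by simp
  have "real (2 ^ (2 ^ ((j - 1) * D))) < real n" using j by (simp only: of_nat_less_iff)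
  then have "log 2 (real (2 ^ (2 ^ ((j - 1) * D)))) < L1" unfolding L1_def
    by (subst log_less_cancel_iff) auto
  then have "real (2 ^ ((j - 1) * D)) < L1" by (simp add: log_nat_power)
  then have "log 2 (real (2 ^ ((j - 1) * D))) < L2" unfolding L2_def
    using log_less_cancel_iff[of 2 "real (2 ^ ((j - 1) * D))" L1] L1p by simp
  then have jd: "real ((j - 1) * D) < L2" by (simp add: log_nat_power)
  have Dp: "real D > 0" using D a0 a_def by linarith
  have "real (j - 1) * real D < L2" using jd by simp
  then have "real (j - 1) < L2 / real D" using Dp by (simp add: field_simps)
  also have "\<dots> \<le> L2 / a" using D L2p a0 Dp unfolding a_def by (intro divide_left_mono) auto
  finally have "real j < L2 / a + 1" by linarith
  also have "\<dots> \<le> 2 * L2 / a" using L2 a0 by (simp add: field_simps)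
  finally have jb: "real j < 2 * L2 / a" .
  define \<phi> where "\<phi> = \<lfloor>L3 - c\<rfloor>"
  have phi0: "\<phi> \<ge> 0" unfolding \<phi>_def using L3 by linarith
  have phi1: "real_of_int \<phi> > L3 - c - 1" unfolding \<phi>_def by linarith
  have "2 powr (L3 - c - 1) \<le> 2 powr real_of_int \<phi>" using phi1 by (intro powr_mono) auto
  moreover have "2 powr (L3 - c - 1) = 2 * L2 / a"
  proof -
    have "2 powr (L3 - c - 1) = 2 powr L3 / 2 powr (c + 1)" by (simp add: powr_diff diff_diff_add)
    also have "2 powr L3 = L2" unfolding L3_def using L2p by simp
    also have "2 powr (c + 1) = a / 2" unfolding a_def by (simp add: powr_add)
    finally show ?thesis by simp
  qed
  moreover have "2 powr real_of_int \<phi> = real (2 ^ nat \<phi>)"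
    using phi0 by (simp add: powr_realpow[symmetric])
  ultimately have "real j < real (2 ^ nat \<phi>)" using jb by linarith
  then have "j < 2 ^ nat \<phi>" by (simp only: of_nat_less_iff)
  then have "length (enc j) \<le> nat \<phi>" by (rule length_enc)
  then have "real (length (enc j)) \<le> real (nat \<phi>)" by simp
  also have "\<dots> = of_int \<phi>" using phi0 by simp
  finally show ?thesis unfolding \<phi>_def L3_def L2_def L1_def .
qed



lemma Tt_bound:
  assumes "1 \<le> M"
  shows "Tt M \<le> 12 * M ^ 9"
proof -
  have a: "M \<le> M * M" using assms by simp
  have b: "1 \<le> M * M" using assms by simp
  have "M * M + M + 3 \<le> 5 * (M * M)" using a b by linarith
  then have "M * (M * M + M + 3) \<le> M * (5 * (M * M))" by (rule mult_le_mono2)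
  moreover have "1 \<le> M * (M * M)" using assms b by (metis mult_le_mono nat_mult_1)
  moreover have "M * (5 * (M * M)) = 5 * (M * (M * M))" by simp
  moreover have "M ^ 3 = M * (M * M)" by (simp add: power3_eq_cube)
  ultimately have c: "Pm M + 1 \<le> 6 * M ^ 3" unfolding Pm_def by linarith
  have m6: "M * M * (2 * M ^ 4) = 2 * M ^ 6"
  proof -
    have "M * M * (2 * M ^ 4) = 2 * (M ^ 2 * M ^ 4)" by (simp add: power2_eq_square)
    also have "M ^ 2 * M ^ 4 = M ^ 6" by (simp flip: power_add)
    finally show ?thesis .
  qed
  have "Tt M = (Pm M + 1) * (2 * M ^ 6)" unfolding Tt_def T0_def m6 ..
  also have "\<dots> \<le> 6 * M ^ 3 * (2 * M ^ 6)" using c by (rule mult_le_mono1)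
  also have "\<dots> = 12 * M ^ 9" by (simp add: power_add[symmetric])
  finally show ?thesis .
qed



theorem mainTheorem1:
  fixes c :: real
  assumes "c > 0"
  shows "\<exists>(f :: pgraph \<Rightarrow> bool list) (A :: algorithm) (Q :: real poly) N.
           \<forall>n \<ge> N. \<forall>G. valid_pgraph G \<and> pg_n G = n \<longrightarrow>
              real (length (f G)) \<le> of_int \<lfloor>log 2 (log 2 (log 2 (real n))) - c\<rfloor> \<and>
              (\<forall>v < n. \<exists>T. real T \<le> poly Q (real n) \<and> explores_in A (f G) G v T)"
proof -
  define D where "D = nat \<lceil>2 powr (c + 2)\<rceil>"
  define Mof where "Mof j = (2::nat) ^ (2 ^ (j * D))" for j
  define useq where "useq M = (SOME s. good M s)" for M
  define \<sigma> where "\<sigma> adv = useq (Mof (dec adv))" for adv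
  define jst where "jst n = (LEAST j. n \<le> Mof j)" for n
  define f :: "pgraph \<Rightarrow> bool list" where "f G = enc (jst (pg_n G))" for G
  define Q :: "real poly" where "Q = monom 12 (9 * 2 ^ D)"
  define N where "N = nat \<lceil>2 powr (2 powr (2 powr (c + 2)))\<rceil> + 3"
  have Dr: "real D \<ge> 2 powr (c + 2)" unfolding D_def by (rule real_nat_ceiling_ge)
  have D1: "D \<ge> 1"
  proof -
    have "(0::real) < 2 powr (c + 2)" by simp
    then show ?thesis using Dr by linarith
  qed
  have main: "real (length (f G)) \<le> of_int \<lfloor>log 2 (log 2 (log 2 (real n))) - c\<rfloor> \<and>
              (\<forall>v < n. \<exists>T. real T \<le> poly Q (real n) \<and> explores_in (algo \<sigma>) (f G) G v T)"
    if n: "n \<ge> N" and G: "valid_pgraph G" "pg_n G = n" for n G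
  proof -
    have n3: "n \<ge> 3" using n unfolding N_def by linarith
    have nr: "real n \<ge> 2 powr (2 powr (2 powr (c + 2)))"
    proof -
      have "2 powr (2 powr (2 powr (c + 2))) \<le> real (nat \<lceil>2 powr (2 powr (2 powr (c + 2)))\<rceil>)"
        by (rule real_nat_ceiling_ge)
      also have "\<dots> \<le> real n" using n unfolding N_def by simp
      finally show ?thesis .
    qed
    have exj: "\<exists>j. n \<le> Mof j"
    proof
      have "n < 2 ^ n" by (rule less_exp)
      also have "n \<le> n * D" using D1 by simp
      then have "n < 2 ^ (n * D)" using less_exp[of "n * D"] by linarith
      then have "2 ^ n \<le> (2::nat) ^ (2 ^ (n * D))" by (intro power_increasing) auto
      finally show "n \<le> Mof n" unfolding Mof_def by simp
    qed
    define j where "j = jst n"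
    define M where "M = Mof j"
    have nM: "n \<le> M" unfolding M_def j_def jst_def using LeastI_ex[OF exj] .
    have j1: "j \<ge> 1"
    proof (rule ccontr)
      assume "\<not> j \<ge> 1"
      then have "j = 0" by simp
      then have "M = 2" unfolding M_def Mof_def by simp
      then show False using nM n3 by simp
    qed
    have jm: "\<not> n \<le> Mof (j - 1)"
      unfolding j_def jst_def by (rule not_less_Least) (use j1 in \<open>simp add: j_def jst_def\<close>)
    then have jlt: "2 ^ (2 ^ ((j - 1) * D)) < n" unfolding Mof_def by simp
    have M1: "1 \<le> M" using nM n3 by simp
    have gd: "good M (useq M)" unfolding useq_def using someI_ex[OF exists_good[OF M1]] .
    have sig: "\<sigma> (f G) = useq M" unfolding \<sigma>_def f_def M_def j_def G(2) dec_enc ..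
    have VG: "VG G" using G n3 by simp
    have len: "length (useq M) = Tt M" using gd unfolding good_def seqs_def by simp
    have MB: "M \<le> n ^ (2 ^ D)"
    proof -
      have "M = 2 ^ (2 ^ ((j - 1) * D) * 2 ^ D)" unfolding M_def Mof_def
        using j1 by (simp add: power_add[symmetric] algebra_simps)
      also have "\<dots> = (2 ^ (2 ^ ((j - 1) * D))) ^ (2 ^ D)" by (simp add: power_mult)
      also have "\<dots> \<le> n ^ (2 ^ D)" using jlt by (intro power_mono) auto
      finally show ?thesis .
    qed
    have TB: "real (Tt M) \<le> poly Q (real n)"
    proof -
      have "Tt M \<le> 12 * M ^ 9" by (rule Tt_bound[OF M1])
      also have "\<dots> \<le> 12 * (n ^ (2 ^ D)) ^ 9" using MB by (intro mult_le_mono2 power_mono) auto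
      also have "\<dots> = 12 * n ^ (9 * 2 ^ D)" by (simp add: power_mult[symmetric] mult.commute)
      finally have "real (Tt M) \<le> real (12 * n ^ (9 * 2 ^ D))" by (simp only: of_nat_le_iff)
      then show ?thesis unfolding Q_def by (simp add: poly_monom)
    qed
    have adv: "real (length (f G)) \<le> of_int \<lfloor>log 2 (log 2 (log 2 (real n))) - c\<rfloor>"
      unfolding f_def G(2) j_def[symmetric] by (rule log_part[OF assms Dr nr jlt])
    have expl: "\<forall>v < n. \<exists>T. real T \<le> poly Q (real n) \<and> explores_in (algo \<sigma>) (f G) G v T"
    proof (intro allI impI)
      fix v assume v: "v < n"
      have cov: "\<forall>w < pg_n G. w \<in> set (visits G v (\<sigma> (f G)))"
        using gd VG nM v G(2) unfolding good_def sig by auto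
      have "explores_in (algo \<sigma>) (f G) G v (length (\<sigma> (f G)))"
        by (rule algo_explores[where \<sigma>=\<sigma> and adv="f G", OF VG _ cov]) (use v G(2) in simp)
      then show "\<exists>T. real T \<le> poly Q (real n) \<and> explores_in (algo \<sigma>) (f G) G v T"
        using TB len sig by auto
    qed
    show ?thesis using adv expl by blast
  qed
  show ?thesis by (intro exI[of _ f] exI[of _ "algo \<sigma>"] exI[of _ Q] exI[of _ N]) (use main in blast)
qed

end
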